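(* Let $\Sigma\subseteq\mathcal L_{\Diamond\forall}$ be finite and closed under subformulas, let $\Lambda={\sf ITL}^0_{\Diamond\forall}$, let $(W_c,\preccurlyeq_c,S_c)$ be the canonical model of $\Lambda$, and let $\Pi=(\Pi^+,\Pi^-)$ be a universal $\Sigma$-profile. Let $W_c[\Pi]=\{\Phi\in W_c:\Pi^+\subseteq\Phi^+\text{ and }\Pi^-\subseteq\Phi^-\}$. Then $W_c[\Pi]$ is upward closed under $\preccurlyeq_c$, and $W_c[\Pi]$ is honest as a $\Sigma$-labelled structure: for every $\Phi\in W_c[\Pi]$ and every $\forall\varphi\in\Sigma$, if $\forall\varphi\in\Phi^+$ then $\varphi\in\Psi^+$ for every $\Psi\in W_c[\Pi]$, and if $\forall\varphi\in\Phi^-$ then $\varphi\in\Psi^-$ for some $\Psi\in W_c[\Pi]$.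
   Context: $\mathcal L_{\Diamond\forall}$: formulas $\varphi::=\bot\mid p\mid\varphi\wedge\varphi\mid\varphi\vee\varphi\mid\varphi\to\varphi\mid\circ\varphi\mid\Diamond\varphi\mid\forall\varphi$; $\neg\varphi:=\varphi\to\bot$, $\varphi\leftrightarrow\psi:=(\varphi\to\psi)\wedge(\psi\to\varphi)$. ${\sf ITL}^0_{\Diamond\forall}$ is the least set of $\mathcal L_{\Diamond\forall}$-formulas containing all substitution instances of the intuitionistic propositional axioms and of $\neg\circ\bot$, $\circ\varphi\wedge\circ\psi\to\circ(\varphi\wedge\psi)$, $\circ(\varphi\vee\psi)\to\circ\varphi\vee\circ\psi$, $\circ(\varphi\to\psi)\to(\circ\varphi\to\circ\psi)$, $\varphi\vee\circ\Diamond\varphi\to\Diamond\varphi$, $\forall\varphi\vee\neg\forall\varphi$, $\forall(\varphi\to\psi)\to(\forall\varphi\to\forall\psi)$, $\forall(\varphi\vee\forall\psi)\to\forall\varphi\vee\forall\psi$, $\forall\varphi\to\varphi$, $\forall\varphi\to\forall\forall\varphi$, $\forall\varphi\leftrightarrow\circ\forall\varphi$, closed under modus ponens, from $\varphi$ infer $\circ\varphi$, from $\varphi\to\psi$ infer $\Diamond\varphi\to\Diamond\psi$, from $\circ\varphi\to\varphi$ infer $\Diamond\varphi\to\varphi$, and from $\varphi$ infer $\forall\varphi$. $\Gamma\vdash\Delta$ means there are finite $\Gamma'\subseteq\Gamma$, $\Delta'\subseteq\Delta$ with $\bigwedge\Gamma'\to\bigvee\Delta'\in\Lambda$. A prime type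 is a pair $(\Phi^+,\Phi^-)$ of sets of $\mathcal L_{\Diamond\forall}$-formulas with $\Phi^+\cup\Phi^-=\mathcal L_{\Diamond\forall}$ and $\Phi^+\not\vdash\Phi^-$. Canonical model: $W_c$ is the set of prime types; $\Phi\preccurlyeq_c\Psi$ iff $\Phi^+\subseteq\Psi^+$ and $\Psi^-\subseteq\Phi^-$; $\Phi\mathrel{S_c}\Psi$ iff $(\Phi,\Psi)$ is sensible ($\circ\varphi\in\Phi^\pm\Rightarrow\varphi\in\Psi^\pm$; $\Diamond\varphi\in\Phi^+\Rightarrow\varphi\in\Phi^+$ or $\Diamond\varphi\in\Psi^+$; $\Diamond\varphi\in\Phi^-\Rightarrow\Diamond\varphi\in\Psi^-$; $\forall\varphi\in\Phi^\pm\Leftrightarrow\forall\varphi\in\Psi^\pm$). $\Sigma_\forall$ denotes the set of formulas in $\Sigma$ of the form $\forall\varphi$; a universal $\Sigma$-profile is a partition $(\Pi^+,\Pi^-)$ of $\Sigma_\forall$. *)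

theory Defs
  imports Main
begin

datatype fm =
    Bot
  | Var nat
  | And fm fm
  | Or fm fm
  | Imp fm fm
  | Nxt fm
  | Dia fm
  | All fm

definition Neg :: "fm \<Rightarrow> fm" where "Neg \<phi> = Imp \<phi> Bot"
definition Iff :: "fm \<Rightarrow> fm \<Rightarrow> fm" where "Iff \<phi> \<psi> = And (Imp \<phi> \<psi>) (Imp \<psi> \<phi>)"
definition Top :: fm where "Top = Imp Bot Bot"

fun subformulas :: "fm \<Rightarrow> fm set" where
  "subformulas Bot = {Bot}"
| "subformulas (Var p) = {Var p}"
| "subformulas (And a b) = insert (And a b) (subformulas a \<union> subformulas b)"
| "subformulas (Or a b) = insert (Or a b) (subformulas a \<union> subformulas b)"
| "subformulas (Imp a b) = insert (Imp a b) (subformulas a \<union> subformulas b)"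
| "subformulas (Nxt a) = insert (Nxt a) (subformulas a)"
| "subformulas (Dia a) = insert (Dia a) (subformulas a)"
| "subformulas (All a) = insert (All a) (subformulas a)"

definition subformula_closed :: "fm set \<Rightarrow> bool" where
  "subformula_closed \<Sigma> \<longleftrightarrow> (\<forall>\<phi>\<in>\<Sigma>. subformulas \<phi> \<subseteq> \<Sigma>)"

inductive_set ITL0 :: "fm set" where
  ax_K:    "Imp \<phi> (Imp \<psi> \<phi>) \<in> ITL0"
| ax_S:    "Imp (Imp \<phi> (Imp \<psi> \<chi>)) (Imp (Imp \<phi> \<psi>) (Imp \<phi> \<chi>)) \<in> ITL0"
| ax_and1: "Imp (And \<phi> \<psi>) \<phi> \<in> ITL0"
| ax_and2: "Imp (And \<phi> \<psi>) \<psi> \<in> ITL0"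
| ax_andI: "Imp \<phi> (Imp \<psi> (And \<phi> \<psi>)) \<in> ITL0"
| ax_or1:  "Imp \<phi> (Or \<phi> \<psi>) \<in> ITL0"
| ax_or2:  "Imp \<psi> (Or \<phi> \<psi>) \<in> ITL0"
| ax_orE:  "Imp (Imp \<phi> \<chi>) (Imp (Imp \<psi> \<chi>) (Imp (Or \<phi> \<psi>) \<chi>)) \<in> ITL0"
| ax_efq:  "Imp Bot \<phi> \<in> ITL0"
| ax_nxt_bot: "Neg (Nxt Bot) \<in> ITL0"
| ax_nxt_and: "Imp (And (Nxt \<phi>) (Nxt \<psi>)) (Nxt (And \<phi> \<psi>)) \<in> ITL0"
| ax_nxt_or:  "Imp (Nxt (Or \<phi> \<psi>)) (Or (Nxt \<phi>) (Nxt \<psi>)) \<in> ITL0"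
| ax_nxt_imp: "Imp (Nxt (Imp \<phi> \<psi>)) (Imp (Nxt \<phi>) (Nxt \<psi>)) \<in> ITL0"
| ax_dia_fix: "Imp (Or \<phi> (Nxt (Dia \<phi>))) (Dia \<phi>) \<in> ITL0"
| ax_all_lem: "Or (All \<phi>) (Neg (All \<phi>)) \<in> ITL0"
| ax_all_K:   "Imp (All (Imp \<phi> \<psi>)) (Imp (All \<phi>) (All \<psi>)) \<in> ITL0"
| ax_all_or:  "Imp (All (Or \<phi> (All \<psi>))) (Or (All \<phi>) (All \<psi>)) \<in> ITL0"
| ax_all_T:   "Imp (All \<phi>) \<phi> \<in> ITL0"
| ax_all_4:   "Imp (All \<phi>) (All (All \<phi>)) \<in> ITL0"
| ax_all_nxt: "Iff (All \<phi>) (Nxt (All \<phi>)) \<in> ITL0"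
| mp:        "\<phi> \<in> ITL0 \<Longrightarrow> Imp \<phi> \<psi> \<in> ITL0 \<Longrightarrow> \<psi> \<in> ITL0"
| nec_nxt:   "\<phi> \<in> ITL0 \<Longrightarrow> Nxt \<phi> \<in> ITL0"
| mono_dia:  "Imp \<phi> \<psi> \<in> ITL0 \<Longrightarrow> Imp (Dia \<phi>) (Dia \<psi>) \<in> ITL0"
| ind_dia:   "Imp (Nxt \<phi>) \<phi> \<in> ITL0 \<Longrightarrow> Imp (Dia \<phi>) \<phi> \<in> ITL0"
| nec_all:   "\<phi> \<in> ITL0 \<Longrightarrow> All \<phi> \<in> ITL0"

definition Conj :: "fm list \<Rightarrow> fm" where "Conj xs = foldr And xs Top"
definition Disj :: "fm list \<Rightarrow> fm" where "Disj xs = foldr Or xs Bot"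

definition derives :: "fm set \<Rightarrow> fm set \<Rightarrow> bool" where
  "derives \<Gamma> \<Delta> \<longleftrightarrow>
     (\<exists>gs ds. set gs \<subseteq> \<Gamma> \<and> set ds \<subseteq> \<Delta> \<and> Imp (Conj gs) (Disj ds) \<in> ITL0)"

type_synonym ptype = "fm set \<times> fm set"

definition prime_type :: "ptype \<Rightarrow> bool" where
  "prime_type \<Phi> \<longleftrightarrow> fst \<Phi> \<union> snd \<Phi> = UNIV \<and> \<not> derives (fst \<Phi>) (snd \<Phi>)"

definition Wc :: "ptype set" where "Wc = {\<Phi>. prime_type \<Phi>}"

definition leq_c :: "ptype \<Rightarrow> ptype \<Rightarrow> bool" where
  "leq_c \<Phi> \<Psi> \<longleftrightarrow> fst \<Phi> \<subseteq> fst \<Psi> \<and> snd \<Psi> \<subseteq> snd \<Phi>"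

definition univ_part :: "fm set \<Rightarrow> fm set" where
  "univ_part \<Sigma> = {\<phi>\<in>\<Sigma>. \<exists>\<psi>. \<phi> = All \<psi>}"

definition universal_profile :: "fm set \<Rightarrow> ptype \<Rightarrow> bool" where
  "universal_profile \<Sigma> \<Pi> \<longleftrightarrow>
     fst \<Pi> \<union> snd \<Pi> = univ_part \<Sigma> \<and> fst \<Pi> \<inter> snd \<Pi> = {}"

definition Wc_restr :: "ptype \<Rightarrow> ptype set" where
  "Wc_restr \<Pi> = {\<Phi>\<in>Wc. fst \<Pi> \<subseteq> fst \<Phi> \<and> snd \<Pi> \<subseteq> snd \<Phi>}"

end

theory Submission
  imports Defs
begin

lemma I: "Imp a a \<in> ITL0"
proof -
  have 1: "Imp a (Imp (Imp a a) a) \<in> ITL0" by (rule ax_K)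
  have 2: "Imp (Imp a (Imp (Imp a a) a)) (Imp (Imp a (Imp a a)) (Imp a a)) \<in> ITL0" by (rule ax_S)
  have 3: "Imp (Imp a (Imp a a)) (Imp a a) \<in> ITL0" by (rule mp[OF 1 2])
  have 4: "Imp a (Imp a a) \<in> ITL0" by (rule ax_K)
  show ?thesis by (rule mp[OF 4 3])
qed

lemma K_lift: "x \<in> ITL0 \<Longrightarrow> Imp h x \<in> ITL0"
  by (rule mp[OF _ ax_K])

lemma mp_ctx: "Imp h (Imp a b) \<in> ITL0 \<Longrightarrow> Imp h a \<in> ITL0 \<Longrightarrow> Imp h b \<in> ITL0"
  by (rule mp[OF _ mp[OF _ ax_S]])

lemma syll: "Imp a b \<in> ITL0 \<Longrightarrow> Imp b c \<in> ITL0 \<Longrightarrow> Imp a c \<in> ITL0"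
  by (rule mp_ctx[OF K_lift])

lemma and_ctx: "Imp h a \<in> ITL0 \<Longrightarrow> Imp h b \<in> ITL0 \<Longrightarrow> Imp h (And a b) \<in> ITL0"
  by (rule mp_ctx[OF mp_ctx[OF K_lift[OF ax_andI]]])

lemma imp_lift: "Imp a b \<in> ITL0 \<Longrightarrow> Imp (Imp x a) (Imp x b) \<in> ITL0"
  by (rule mp[OF K_lift ax_S])

lemma ded: "Imp (And h a) b \<in> ITL0 \<Longrightarrow> Imp h (Imp a b) \<in> ITL0"
  by (rule syll[OF ax_andI imp_lift])

lemma or_ctx: "Imp h (Or a b) \<in> ITL0 \<Longrightarrow> Imp (And h a) c \<in> ITL0 \<Longrightarrow> Imp (And h b) c \<in> ITL0
   \<Longrightarrow> Imp h c \<in> ITL0"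
  by (rule mp_ctx[OF mp_ctx[OF mp_ctx[OF K_lift[OF ax_orE] ded] ded]])

lemma or_elim: "Imp a c \<in> ITL0 \<Longrightarrow> Imp b c \<in> ITL0 \<Longrightarrow> Imp (Or a b) c \<in> ITL0"
  by (rule mp[OF _ mp[OF _ ax_orE]])

lemma TopI: "Top \<in> ITL0" unfolding Top_def by (rule I)

lemma all_mono: "Imp a b \<in> ITL0 \<Longrightarrow> Imp (All a) (All b) \<in> ITL0"
  by (rule mp[OF nec_all ax_all_K])

lemma all_and: "Imp (And (All x) (All y)) (All (And x y)) \<in> ITL0"
proof -
  let ?h = "And (All x) (All y)"
  have a: "Imp ?h (All x) \<in> ITL0" by (rule ax_and1)
  have b: "Imp ?h (All y) \<in> ITL0" by (rule ax_and2)
  have c: "Imp ?h (All (Imp y (And x y))) \<in> ITL0"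
    by (rule mp_ctx[OF K_lift[OF all_mono[OF ax_andI]] a])
  show ?thesis by (rule mp_ctx[OF mp_ctx[OF K_lift[OF ax_all_K] c] b])
qed

lemma Conj_Nil[simp]: "Conj [] = Top" and Conj_Cons[simp]: "Conj (g#gs) = And g (Conj gs)"
  by (simp_all add: Conj_def)
lemma Disj_Nil[simp]: "Disj [] = Bot" and Disj_Cons[simp]: "Disj (g#gs) = Or g (Disj gs)"
  by (simp_all add: Disj_def)

lemma conj_mem: "x \<in> set gs \<Longrightarrow> Imp (Conj gs) x \<in> ITL0"
proof (induction gs)
  case Nil then show ?case by simp
next
  case (Cons g gs)
  show ?case
  proof (cases "x = g")
    case True then show ?thesis by (simp add: ax_and1)
  next
    case False then show ?thesis using Cons by (auto intro: syll[OF ax_and2])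
  qed
qed

lemma conj_sub: "set gs \<subseteq> set gs' \<Longrightarrow> Imp (Conj gs') (Conj gs) \<in> ITL0"
  by (induction gs) (auto intro: K_lift TopI and_ctx conj_mem)

lemma disj_mem: "x \<in> set ds \<Longrightarrow> Imp x (Disj ds) \<in> ITL0"
proof (induction ds)
  case Nil then show ?case by simp
next
  case (Cons g ds)
  show ?case
  proof (cases "x = g")
    case True then show ?thesis by (simp add: ax_or1)
  next
    case False then show ?thesis using Cons by (auto intro: syll[OF _ ax_or2])
  qed
qed

lemma disj_sub: "set ds \<subseteq> set ds' \<Longrightarrow> Imp (Disj ds) (Disj ds') \<in> ITL0"
  by (induction ds) (auto intro: ax_efq or_elim disj_mem)

definition prov :: "fm list \<Rightarrow> fm list \<Rightarrow> bool" where
  "prov gs ds \<longleftrightarrow> Imp (Conj gs) (Disj ds) \<in> ITL0"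

lemma prov_mono: "prov gs ds \<Longrightarrow> set gs \<subseteq> set gs' \<Longrightarrow> set ds \<subseteq> set ds' \<Longrightarrow> prov gs' ds'"
  unfolding prov_def by (meson conj_sub disj_sub syll)

lemma prov_cut: "prov (p#gs) ds \<Longrightarrow> prov gs (p#ds) \<Longrightarrow> prov gs ds"
  unfolding prov_def
  apply simp
  apply (rule or_ctx[where a = p and b = "Disj ds"])
    apply assumption
   apply (rule syll[OF and_ctx[OF ax_and2 ax_and1]])
   apply assumption
  apply (rule ax_and2)
  done

lemma derives_prov: "derives \<Gamma> \<Delta> \<longleftrightarrow> (\<exists>gs ds. set gs \<subseteq> \<Gamma> \<and> set ds \<subseteq> \<Delta> \<and> prov gs ds)"
  unfolding derives_def prov_def by simp

lemma derives_cut: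
  assumes "derives (insert p \<Gamma>) \<Delta>" "derives \<Gamma> (insert p \<Delta>)"
  shows "derives \<Gamma> \<Delta>"
proof -
  obtain gs1 ds1 where 1: "set gs1 \<subseteq> insert p \<Gamma>" "set ds1 \<subseteq> \<Delta>" "prov gs1 ds1"
    using assms(1) unfolding derives_prov by blast
  obtain gs2 ds2 where 2: "set gs2 \<subseteq> \<Gamma>" "set ds2 \<subseteq> insert p \<Delta>" "prov gs2 ds2"
    using assms(2) unfolding derives_prov by blast
  let ?gs = "filter (\<lambda>x. x \<noteq> p) gs1 @ gs2"
  let ?ds = "ds1 @ filter (\<lambda>x. x \<noteq> p) ds2"
  have a: "prov (p # ?gs) ?ds" by (rule prov_mono[OF 1(3)]) auto
  have b: "prov ?gs (p # ?ds)" by (rule prov_mono[OF 2(3)]) auto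
  have "prov ?gs ?ds" by (rule prov_cut[OF a b])
  moreover have "set ?gs \<subseteq> \<Gamma>" "set ?ds \<subseteq> \<Delta>" using 1 2 by auto
  ultimately show ?thesis unfolding derives_prov by blast
qed

definition lft :: "(fm + fm) set \<Rightarrow> fm set" where "lft S = {x. Inl x \<in> S}"
definition rgt :: "(fm + fm) set \<Rightarrow> fm set" where "rgt S = {x. Inr x \<in> S}"

lemma lindenbaum:
  assumes "\<not> derives \<Gamma> \<Delta>"
  shows "\<exists>\<Psi>. prime_type \<Psi> \<and> \<Gamma> \<subseteq> fst \<Psi> \<and> \<Delta> \<subseteq> snd \<Psi>"
proof -
  define A where "A = {S. \<Gamma> \<subseteq> lft S \<and> \<Delta> \<subseteq> rgt S \<and> \<not> derives (lft S) (rgt S)}"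
  have S0: "Inl ` \<Gamma> \<union> Inr ` \<Delta> \<in> A"
  proof -
    have "lft (Inl ` \<Gamma> \<union> Inr ` \<Delta>) = \<Gamma>" "rgt (Inl ` \<Gamma> \<union> Inr ` \<Delta>) = \<Delta>"
      unfolding lft_def rgt_def by auto
    then show ?thesis using assms unfolding A_def by simp
  qed
  have "\<exists>M\<in>A. \<forall>X\<in>A. M \<subseteq> X \<longrightarrow> X = M"
  proof (rule subset_Zorn_nonempty)
    show "A \<noteq> {}" using S0 by blast
  next
    fix C assume C: "C \<noteq> {}" "subset.chain A C"
    then have CA: "C \<subseteq> A" by (simp add: subset.chain_def)
    obtain X where X: "X \<in> C" using C by blast
    have g: "\<Gamma> \<subseteq> lft (\<Union>C)" "\<Delta> \<subseteq> rgt (\<Union>C)"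
      using X CA unfolding A_def lft_def rgt_def by blast+
    have "\<not> derives (lft (\<Union>C)) (rgt (\<Union>C))"
    proof
      assume "derives (lft (\<Union>C)) (rgt (\<Union>C))"
      then obtain gs ds where d: "set gs \<subseteq> lft (\<Union>C)" "set ds \<subseteq> rgt (\<Union>C)" "prov gs ds"
        unfolding derives_prov by blast
      have "finite (Inl ` set gs \<union> Inr ` set ds)" by simp
      moreover have "Inl ` set gs \<union> Inr ` set ds \<subseteq> \<Union>C" using d(1,2) unfolding lft_def rgt_def by blast
      ultimately obtain B where B: "B \<in> C" "Inl ` set gs \<union> Inr ` set ds \<subseteq> B"
        using finite_subset_Union_chain[OF _ _ C(1) C(2)] by metis
      then have "set gs \<subseteq> lft B" "set ds \<subseteq> rgt B" unfolding lft_def rgt_def by blast+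
      then have "derives (lft B) (rgt B)" using d(3) unfolding derives_prov by blast
      moreover have "B \<in> A" using B CA by blast
      ultimately show False unfolding A_def by blast
    qed
    then show "\<Union>C \<in> A" using g unfolding A_def by blast
  qed
  then obtain M where M: "M \<in> A" and max: "\<And>X. X \<in> A \<Longrightarrow> M \<subseteq> X \<Longrightarrow> X = M" by blast
  have MA: "\<Gamma> \<subseteq> lft M" "\<Delta> \<subseteq> rgt M" "\<not> derives (lft M) (rgt M)" using M unfolding A_def by auto
  have "lft M \<union> rgt M = UNIV"
  proof (rule ccontr)
    assume "lft M \<union> rgt M \<noteq> UNIV"
    then obtain x where x: "x \<notin> lft M" "x \<notin> rgt M" by blast
    have l: "lft (insert (Inl x) M) = insert x (lft M)" "rgt (insert (Inl x) M) = rgt M"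
      unfolding lft_def rgt_def by auto
    have r: "lft (insert (Inr x) M) = lft M" "rgt (insert (Inr x) M) = insert x (rgt M)"
      unfolding lft_def rgt_def by auto
    have "derives (insert x (lft M)) (rgt M)"
    proof (rule ccontr)
      assume "\<not> ?thesis"
      then have "insert (Inl x) M \<in> A" using MA l unfolding A_def by auto
      then have "insert (Inl x) M = M" using max by blast
      then show False using x unfolding lft_def by blast
    qed
    moreover have "derives (lft M) (insert x (rgt M))"
    proof (rule ccontr)
      assume "\<not> ?thesis"
      then have "insert (Inr x) M \<in> A" using MA r unfolding A_def by auto
      then have "insert (Inr x) M = M" using max by blast
      then show False using x unfolding rgt_def by blast
    qed
    ultimately show False using derives_cut MA(3) by blast
  qed
  then show ?thesis using MA unfolding prime_type_def by (intro exI[of _ "(lft M, rgt M)"]) simp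
qed

lemma boxed_disj: "\<forall>x\<in>set ds. \<exists>\<psi>. x = All \<psi> \<Longrightarrow> Imp (Disj ds) (All (Disj ds)) \<in> ITL0"
proof (induction ds)
  case Nil then show ?case by (simp add: ax_efq)
next
  case (Cons d ds)
  then obtain \<psi> where d: "d = All \<psi>" by auto
  have 1: "Imp (All \<psi>) (All (Or (All \<psi>) (Disj ds))) \<in> ITL0"
    by (rule syll[OF ax_all_4 all_mono[OF ax_or1]])
  have 2: "Imp (Disj ds) (All (Or (All \<psi>) (Disj ds))) \<in> ITL0"
    using Cons by (intro syll[OF _ all_mono[OF ax_or2]]) auto
  show ?case using or_elim[OF 1 2] d by simp
qed

lemma boxed_conj: "\<forall>x\<in>set gs. \<exists>\<psi>. x = All \<psi> \<Longrightarrow> Imp (Conj gs) (All (Conj gs)) \<in> ITL0"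
proof (induction gs)
  case Nil then show ?case by (simp add: K_lift nec_all TopI)
next
  case (Cons g gs)
  then obtain \<psi> where g: "g = All \<psi>" by auto
  let ?h = "And (All \<psi>) (Conj gs)"
  have 1: "Imp ?h (All (All \<psi>)) \<in> ITL0" by (rule syll[OF ax_and1 ax_all_4])
  have 2: "Imp ?h (All (Conj gs)) \<in> ITL0" using Cons by (intro syll[OF ax_and2]) auto
  have "Imp ?h (All ?h) \<in> ITL0" by (rule syll[OF and_ctx[OF 1 2] all_and])
  then show ?case using g by simp
qed

lemma modal_step:
  assumes "prov gs (p#ds)" "\<forall>x\<in>set gs. \<exists>\<psi>. x = All \<psi>" "\<forall>x\<in>set ds. \<exists>\<psi>. x = All \<psi>"
  shows "prov gs (All p # ds)"
proof -
  let ?G = "Conj gs" and ?D = "Disj ds"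
  have s0: "Imp ?G (Or p ?D) \<in> ITL0" using assms(1) unfolding prov_def by simp
  have s2: "Imp ?G (All (Or p ?D)) \<in> ITL0"
    by (rule syll[OF boxed_conj[OF assms(2)] all_mono[OF s0]])
  have s3: "Imp (Or p ?D) (Or p (All ?D)) \<in> ITL0"
    by (rule or_elim[OF ax_or1 syll[OF boxed_disj[OF assms(3)] ax_or2]])
  have s5: "Imp ?G (Or (All p) (All ?D)) \<in> ITL0"
    by (rule syll[OF syll[OF s2 all_mono[OF s3]] ax_all_or])
  have s6: "Imp (Or (All p) (All ?D)) (Or (All p) ?D) \<in> ITL0"
    by (rule or_elim[OF ax_or1 syll[OF ax_all_T ax_or2]])
  show ?thesis unfolding prov_def using syll[OF s5 s6] by simp
qed

lemma prime_disjoint: "prime_type \<Phi> \<Longrightarrow> x \<in> fst \<Phi> \<Longrightarrow> x \<in> snd \<Phi> \<Longrightarrow> False"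
proof -
  assume a: "prime_type \<Phi>" "x \<in> fst \<Phi>" "x \<in> snd \<Phi>"
  have "prov [x] [x]" unfolding prov_def by (simp add: syll[OF ax_and1 ax_or1])
  then have "derives (fst \<Phi>) (snd \<Phi>)" using a unfolding derives_prov
    by (intro exI[of _ "[x]"]) auto
  then show False using a unfolding prime_type_def by blast
qed

lemma prime_in: "prime_type \<Phi> \<Longrightarrow> x \<notin> snd \<Phi> \<Longrightarrow> x \<in> fst \<Phi>"
  unfolding prime_type_def by blast

theorem lemma9p3:
  fixes \<Sigma> :: "fm set" and \<Pi> :: ptype
  assumes "finite \<Sigma>" and "subformula_closed \<Sigma>"
    and "universal_profile \<Sigma> \<Pi>"
  shows "(\<forall>\<Phi>\<in>Wc_restr \<Pi>. \<forall>\<Psi>\<in>Wc. leq_c \<Phi> \<Psi> \<longrightarrow> \<Psi> \<in> Wc_restr \<Pi>)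
    \<and> (\<forall>\<Phi>\<in>Wc_restr \<Pi>. \<forall>\<phi>. All \<phi> \<in> \<Sigma> \<longrightarrow>
          (All \<phi> \<in> fst \<Phi> \<longrightarrow> (\<forall>\<Psi>\<in>Wc_restr \<Pi>. \<phi> \<in> fst \<Psi>))
        \<and> (All \<phi> \<in> snd \<Phi> \<longrightarrow> (\<exists>\<Psi>\<in>Wc_restr \<Pi>. \<phi> \<in> snd \<Psi>)))"
proof -
  have Pall: "\<And>x. x \<in> fst \<Pi> \<union> snd \<Pi> \<Longrightarrow> \<exists>\<psi>. x = All \<psi>"
    using assms(3) unfolding universal_profile_def univ_part_def by blast
  have part1: "\<forall>\<Phi>\<in>Wc_restr \<Pi>. \<forall>\<Psi>\<in>Wc. leq_c \<Phi> \<Psi> \<longrightarrow> \<Psi> \<in> Wc_restr \<Pi>"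
  proof (intro ballI impI)
    fix \<Phi> \<Psi> assume F: "\<Phi> \<in> Wc_restr \<Pi>" and P: "\<Psi> \<in> Wc" and le: "leq_c \<Phi> \<Psi>"
    have pF: "prime_type \<Phi>" and pP: "prime_type \<Psi>" using F P unfolding Wc_restr_def Wc_def by auto
    have "snd \<Pi> \<subseteq> snd \<Psi>"
    proof
      fix x assume x: "x \<in> snd \<Pi>"
      then obtain \<psi> where xe: "x = All \<psi>" using Pall by blast
      have xF: "x \<in> snd \<Phi>" using x F unfolding Wc_restr_def by auto
      show "x \<in> snd \<Psi>"
      proof (rule ccontr)
        assume "x \<notin> snd \<Psi>"
        then have xP: "x \<in> fst \<Psi>" using prime_in[OF pP] by blast
        have "Neg x \<notin> snd \<Phi>"
        proof
          assume n: "Neg x \<in> snd \<Phi>"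
          have o: "Imp (Or x (Neg x)) (Or x (Or (Neg x) Bot)) \<in> ITL0"
            by (rule or_elim[OF ax_or1 syll[OF ax_or1 ax_or2]])
          have l: "Or x (Neg x) \<in> ITL0" unfolding xe by (rule ax_all_lem)
          have "Imp (Conj []) (Disj [x, Neg x]) \<in> ITL0"
            using K_lift[OF mp[OF l o]] by simp
          then have "prov [] [x, Neg x]" unfolding prov_def .
          then have "derives (fst \<Phi>) (snd \<Phi>)" unfolding derives_prov using n xF
            by (intro exI[of _ "[]"] exI[of _ "[x, Neg x]"]) auto
          then show False using pF unfolding prime_type_def by blast
        qed
        then have "Neg x \<in> fst \<Psi>" using prime_in[OF pF] le unfolding leq_c_def by blast
        moreover have "prov [x, Neg x] []"
        proof -
          have "Imp (And x (And (Imp x Bot) Top)) Bot \<in> ITL0"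
            by (rule mp_ctx[OF syll[OF ax_and2 ax_and1] ax_and1])
          then show ?thesis unfolding prov_def Neg_def by simp
        qed
        ultimately have "derives (fst \<Psi>) (snd \<Psi>)" unfolding derives_prov using xP
          by (intro exI[of _ "[x, Neg x]"] exI[of _ "[]"]) auto
        then show False using pP unfolding prime_type_def by blast
      qed
    qed
    then show "\<Psi> \<in> Wc_restr \<Pi>" using F P le unfolding Wc_restr_def leq_c_def by auto
  qed
  have part2a: "\<And>\<Phi> \<phi> \<Psi>. \<Phi> \<in> Wc_restr \<Pi> \<Longrightarrow> All \<phi> \<in> \<Sigma> \<Longrightarrow> All \<phi> \<in> fst \<Phi> \<Longrightarrow> \<Psi> \<in> Wc_restr \<Pi>
      \<Longrightarrow> \<phi> \<in> fst \<Psi>"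
  proof -
    fix \<Phi> \<phi> \<Psi> assume F: "\<Phi> \<in> Wc_restr \<Pi>" and S: "All \<phi> \<in> \<Sigma>" and A: "All \<phi> \<in> fst \<Phi>"
      and P: "\<Psi> \<in> Wc_restr \<Pi>"
    have pF: "prime_type \<Phi>" and pP: "prime_type \<Psi>" using F P unfolding Wc_restr_def Wc_def by auto
    have "All \<phi> \<in> fst \<Pi> \<union> snd \<Pi>" using S assms(3) unfolding universal_profile_def univ_part_def by auto
    moreover have "All \<phi> \<notin> snd \<Pi>" using F A prime_disjoint[OF pF] unfolding Wc_restr_def by auto
    ultimately have "All \<phi> \<in> fst \<Psi>" using P unfolding Wc_restr_def by auto
    show "\<phi> \<in> fst \<Psi>"
    proof (rule ccontr)
      assume "\<phi> \<notin> fst \<Psi>"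
      then have "\<phi> \<in> snd \<Psi>" using pP unfolding prime_type_def by blast
      moreover have "prov [All \<phi>] [\<phi>]" unfolding prov_def
        by simp (rule syll[OF syll[OF ax_and1 ax_all_T] ax_or1])
      ultimately have "derives (fst \<Psi>) (snd \<Psi>)" unfolding derives_prov using \<open>All \<phi> \<in> fst \<Psi>\<close>
        by (intro exI[of _ "[All \<phi>]"] exI[of _ "[\<phi>]"]) auto
      then show False using pP unfolding prime_type_def by blast
    qed
  qed
  have part2b: "\<And>\<Phi> \<phi>. \<Phi> \<in> Wc_restr \<Pi> \<Longrightarrow> All \<phi> \<in> snd \<Phi> \<Longrightarrow> \<exists>\<Psi>\<in>Wc_restr \<Pi>. \<phi> \<in> snd \<Psi>"
  proof -
    fix \<Phi> \<phi> assume F: "\<Phi> \<in> Wc_restr \<Pi>" and A: "All \<phi> \<in> snd \<Phi>"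
    have pF: "prime_type \<Phi>" using F unfolding Wc_restr_def Wc_def by auto
    define \<Gamma> where "\<Gamma> = {x \<in> fst \<Phi>. \<exists>\<psi>. x = All \<psi>}"
    define \<Delta> where "\<Delta> = insert \<phi> {x \<in> snd \<Phi>. \<exists>\<psi>. x = All \<psi>}"
    have "\<not> derives \<Gamma> \<Delta>"
    proof
      assume "derives \<Gamma> \<Delta>"
      then obtain gs ds where d: "set gs \<subseteq> \<Gamma>" "set ds \<subseteq> \<Delta>" "prov gs ds"
        unfolding derives_prov by blast
      let ?ds = "filter (\<lambda>x. x \<noteq> \<phi>) ds"
      have "prov gs (\<phi> # ?ds)" by (rule prov_mono[OF d(3)]) auto
      moreover have "\<forall>x\<in>set gs. \<exists>\<psi>. x = All \<psi>" using d(1) unfolding \<Gamma>_def by auto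
      moreover have "\<forall>x\<in>set ?ds. \<exists>\<psi>. x = All \<psi>" using d(2) unfolding \<Delta>_def by auto
      ultimately have "prov gs (All \<phi> # ?ds)" by (rule modal_step)
      moreover have "set gs \<subseteq> fst \<Phi>" "set (All \<phi> # ?ds) \<subseteq> snd \<Phi>"
        using d(1,2) A unfolding \<Gamma>_def \<Delta>_def by auto
      ultimately have "derives (fst \<Phi>) (snd \<Phi>)" unfolding derives_prov by blast
      then show False using pF unfolding prime_type_def by blast
    qed
    then obtain \<Psi> where P: "prime_type \<Psi>" "\<Gamma> \<subseteq> fst \<Psi>" "\<Delta> \<subseteq> snd \<Psi>"
      using lindenbaum by blast
    have "fst \<Pi> \<subseteq> \<Gamma>" "snd \<Pi> \<subseteq> \<Delta>" using F Pall unfolding Wc_restr_def \<Gamma>_def \<Delta>_def by auto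
    then have "\<Psi> \<in> Wc_restr \<Pi>" using P unfolding Wc_restr_def Wc_def by auto
    moreover have "\<phi> \<in> snd \<Psi>" using P(3) unfolding \<Delta>_def by auto
    ultimately show "\<exists>\<Psi>\<in>Wc_restr \<Pi>. \<phi> \<in> snd \<Psi>" by blast
  qed
  show ?thesis using part1 part2a part2b by blast
qed

end
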